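(* Let $\mathcal{F}$ be a frame, let $C_{cut}$ be an undirected cut between $C_s$ and $C_o$ (all subsets of $\mathcal{CH}$), and let $\mathcal{B}_o\in\mathrm{lruns}_{C_o}$. Then $$J_{C_o}^{C_s}(\mathcal{B}_o)=\bigcup_{\mathcal{B}_c\in J_{C_o}^{C_{cut}}(\mathcal{B}_o)} J_{C_{cut}}^{C_s}(\mathcal{B}_c).$$
   Context: A frame $\mathcal{F}$ consists of pairwise disjoint sets $\mathcal{LO}$ (locations), $\mathcal{CH}$ (channels), $\mathcal{D}$ (data). Each channel $c$ either has both a sender $\mathrm{sender}(c)$ and recipient $\mathrm{recipient}(c)$ in $\mathcal{LO}$ (possibly equal), or neither; $\mathrm{chans}(\ell)=\{c:\mathrm{sender}(c)=\ell\text{ or }\mathrm{recipient}(c)=\ell\}$. Each location $\ell$ has a prefix-closed set $\mathrm{traces}(\ell)$ of finite or infinite sequences of labels $(c,v)$, $c\in\mathrm{chans}(\ell)$, $v\in\mathcal{D}$. Events come from a set $E$ with $\mathrm{chan}:E\to\mathcal{CH}$, $\mathrm{msg}:E\to\mathcal{D}$. A system of events $(B,\preceq)$ has $B\subseteq E$, $\preceq$ a partial order with finitely many predecessors per event; it is an execution ($\in\mathrm{exec}(\mathcal{F})$) iff for each location $\ell$ the events whose channel has $\ell$ as sender or recipient are linearly ordered and, as a sequence of labels $(\mathrm{chan}(e),\mathrm{msg}(e))$, lie in $\mathrm{traces}(\ell)$. $\mathcal{B}|_C$ keeps events with channel in $C$ with the restricted order; $\mathrm{lruns}_C=\{\mathcal{A}|_C:\mathcal{A}\in\mathrm{exec}(\mathcal{F})\}$;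 $J_C^{C'}(\mathcal{B})=\{\mathcal{A}|_{C'}:\mathcal{A}\in\mathrm{exec}(\mathcal{F}),\mathcal{A}|_C=\mathcal{B}\}$. An undirected path is a sequence of locations $\ell_0,\dots,\ell_n$ with channels $c_1,\dots,c_n$, each $c_k$ having endpoints $\ell_{k-1},\ell_k$ in some direction (the path traverses the $c_k$). $C_{cut}$ is an undirected cut between $C_s$ and $C_o$ iff $C_s,C_{cut},C_o$ are pairwise disjoint and every undirected path from an endpoint location of a channel in $C_o$ to an endpoint location of a channel in $C_s$ traverses some channel in $C_{cut}$. *)

theory Defs
  imports Main
begin

text \<open>Locations, channels and data are the (automatically pairwise
disjoint) types 'l, 'c, 'd.  A channel either has a sender and a recipient
(ends c = Some (sender, recipient)) or neither (ends c = None).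
Finite or infinite sequences of labels are represented canonically as
functions nat \<Rightarrow> 'a option whose domain is downward closed.\<close>

type_synonym 'a fiseq = "nat \<Rightarrow> 'a option"

definition valid_seq :: "'a fiseq \<Rightarrow> bool" where
  "valid_seq s \<longleftrightarrow> (\<forall>i. s (Suc i) \<noteq> None \<longrightarrow> s i \<noteq> None)"

definition seq_prefix :: "'a fiseq \<Rightarrow> 'a fiseq \<Rightarrow> bool" where
  "seq_prefix t s \<longleftrightarrow> valid_seq t \<and> (\<forall>i. t i \<noteq> None \<longrightarrow> t i = s i)"

definition chans :: "('c \<Rightarrow> ('l \<times> 'l) option) \<Rightarrow> 'l \<Rightarrow> 'c set" where
  "chans ends l = {c. \<exists>s r. ends c = Some (s, r) \<and> (s = l \<or> r = l)}"

definition frame :: "('c \<Rightarrow> ('l \<times> 'l) option) \<Rightarrow> ('l \<Rightarrow> ('c \<times> 'd) fiseq set) \<Rightarrow> bool" where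
  "frame ends traces \<longleftrightarrow>
     (\<forall>l. \<forall>s\<in>traces l. valid_seq s
        \<and> (\<forall>i c v. s i = Some (c, v) \<longrightarrow> c \<in> chans ends l)
        \<and> (\<forall>t. seq_prefix t s \<longrightarrow> t \<in> traces l))"

type_synonym 'e soe = "'e set \<times> ('e \<times> 'e) set"

definition system_of_events :: "'e soe \<Rightarrow> bool" where
  "system_of_events BR \<longleftrightarrow> (case BR of (B, R) \<Rightarrow>
     R \<subseteq> B \<times> B \<and> refl_on B R \<and> antisym R \<and> trans R
     \<and> (\<forall>e\<in>B. finite {e'. (e', e) \<in> R}))"

text \<open>The sequence of labels of a linearly ordered set S of events (every event
having finitely many predecessors): position i holds the label of the event
with exactly i strict predecessors in S.\<close>

definition label_seq ::
  "('e \<Rightarrow> 'c) \<Rightarrow> ('e \<Rightarrow> 'd) \<Rightarrow> ('e \<times> 'e) set \<Rightarrow> 'e set \<Rightarrow> ('c \<times> 'd) fiseq" where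
  "label_seq chan msg R S i =
     (if \<exists>e\<in>S. card {e'\<in>S. (e', e) \<in> R \<and> e' \<noteq> e} = i
      then Some (let e = (SOME e. e \<in> S \<and> card {e'\<in>S. (e', e) \<in> R \<and> e' \<noteq> e} = i)
                 in (chan e, msg e))
      else None)"

definition exec ::
  "('c \<Rightarrow> ('l \<times> 'l) option) \<Rightarrow> ('l \<Rightarrow> ('c \<times> 'd) fiseq set) \<Rightarrow> ('e \<Rightarrow> 'c) \<Rightarrow> ('e \<Rightarrow> 'd) \<Rightarrow> 'e soe set" where
  "exec ends traces chan msg = {(B, R). system_of_events (B, R) \<and>
     (\<forall>l. let S = {e\<in>B. chan e \<in> chans ends l} in
        (\<forall>e\<in>S. \<forall>e'\<in>S. (e, e') \<in> R \<or> (e', e) \<in> R)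
        \<and> label_seq chan msg R S \<in> traces l)}"

definition restr :: "('e \<Rightarrow> 'c) \<Rightarrow> 'c set \<Rightarrow> 'e soe \<Rightarrow> 'e soe" where
  "restr chan C BR = (case BR of (B, R) \<Rightarrow>
     (let B' = {e\<in>B. chan e \<in> C} in (B', R \<inter> (B' \<times> B'))))"

definition lruns ::
  "('c \<Rightarrow> ('l \<times> 'l) option) \<Rightarrow> ('l \<Rightarrow> ('c \<times> 'd) fiseq set) \<Rightarrow> ('e \<Rightarrow> 'c) \<Rightarrow> ('e \<Rightarrow> 'd) \<Rightarrow> 'c set \<Rightarrow> 'e soe set" where
  "lruns ends traces chan msg C = {restr chan C A | A. A \<in> exec ends traces chan msg}"

definition J ::
  "('c \<Rightarrow> ('l \<times> 'l) option) \<Rightarrow> ('l \<Rightarrow> ('c \<times> 'd) fiseq set) \<Rightarrow> ('e \<Rightarrow> 'c) \<Rightarrow> ('e \<Rightarrow> 'd)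
   \<Rightarrow> 'c set \<Rightarrow> 'c set \<Rightarrow> 'e soe \<Rightarrow> 'e soe set" where
  "J ends traces chan msg C C' B =
     {restr chan C' A | A. A \<in> exec ends traces chan msg \<and> restr chan C A = B}"

definition upath :: "('c \<Rightarrow> ('l \<times> 'l) option) \<Rightarrow> 'l list \<Rightarrow> 'c list \<Rightarrow> bool" where
  "upath ends ls cs \<longleftrightarrow> length ls = Suc (length cs) \<and>
     (\<forall>k < length cs. ends (cs ! k) = Some (ls ! k, ls ! Suc k)
                     \<or> ends (cs ! k) = Some (ls ! Suc k, ls ! k))"

definition endpoint_locs :: "('c \<Rightarrow> ('l \<times> 'l) option) \<Rightarrow> 'c set \<Rightarrow> 'l set" where
  "endpoint_locs ends C = {l. \<exists>c\<in>C. \<exists>s r. ends c = Some (s, r) \<and> (l = s \<or> l = r)}"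

definition undirected_cut :: "('c \<Rightarrow> ('l \<times> 'l) option) \<Rightarrow> 'c set \<Rightarrow> 'c set \<Rightarrow> 'c set \<Rightarrow> bool" where
  "undirected_cut ends Ccut Cs Co \<longleftrightarrow>
     Cs \<inter> Ccut = {} \<and> Cs \<inter> Co = {} \<and> Ccut \<inter> Co = {} \<and>
     (\<forall>ls cs. upath ends ls cs \<and> hd ls \<in> endpoint_locs ends Co \<and> last ls \<in> endpoint_locs ends Cs
        \<longrightarrow> (\<exists>c\<in>set cs. c \<in> Ccut))"

end

theory Submission
  imports Defs
begin

lemma label_seq_cong:
  assumes "R \<inter> S \<times> S = R' \<inter> S \<times> S"
  shows "label_seq chan msg R S = label_seq chan msg R' S"
proof -
  have eq: "\<And>e. e \<in> S \<Longrightarrow> {e'\<in>S. (e', e) \<in> R \<and> e' \<noteq> e} = {e'\<in>S. (e', e) \<in> R' \<and> e' \<noteq> e}"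
    using assms by blast
  have P: "\<And>i. (\<lambda>e. e \<in> S \<and> card {e'\<in>S. (e', e) \<in> R \<and> e' \<noteq> e} = i)
            = (\<lambda>e. e \<in> S \<and> card {e'\<in>S. (e', e) \<in> R' \<and> e' \<noteq> e} = i)"
    using eq by (auto simp del: Collect_conj_eq)
  have Q: "\<And>i. (\<exists>e\<in>S. card {e'\<in>S. (e', e) \<in> R \<and> e' \<noteq> e} = i)
            = (\<exists>e\<in>S. card {e'\<in>S. (e', e) \<in> R' \<and> e' \<noteq> e} = i)"
    using eq by (metis (no_types, lifting))
  show ?thesis
    unfolding label_seq_def[abs_def] using P Q by presburger
qed

lemma upath_single: "upath ends [l] []"
  by (simp add: upath_def)

lemma upath_snoc:
  assumes "upath ends ls cs"
    and "ends c = Some (last ls, r) \<or> ends c = Some (r, last ls)"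
  shows "upath ends (ls @ [r]) (cs @ [c])"
proof -
  have len: "length ls = Suc (length cs)" using assms(1) by (simp add: upath_def)
  hence ne: "ls \<noteq> []" by auto
  have lst: "last ls = ls ! length cs" using ne len by (simp add: last_conv_nth)
  show ?thesis
    unfolding upath_def
  proof (intro conjI allI impI)
    show "length (ls @ [r]) = Suc (length (cs @ [c]))" using len by simp
  next
    fix k assume k: "k < length (cs @ [c])"
    show "ends ((cs @ [c]) ! k) = Some ((ls @ [r]) ! k, (ls @ [r]) ! Suc k) \<or>
          ends ((cs @ [c]) ! k) = Some ((ls @ [r]) ! Suc k, (ls @ [r]) ! k)"
    proof (cases "k < length cs")
      case True
      then show ?thesis using assms(1) len by (simp add: upath_def nth_append)
    next
      case False
      hence "k = length cs" using k by simp
      then show ?thesis using assms(2) len lst by (simp add: nth_append)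
    qed
  qed
qed

lemma glue:
  assumes A1: "(B1, R1) \<in> exec ends traces chan msg"
    and A2: "(B2, R2) \<in> exec ends traces chan msg"
    and KC: "K \<inter> Ccut = {}"
    and cuteq: "restr chan Ccut (B1, R1) = restr chan Ccut (B2, R2)"
    and loc: "\<And>l. chans ends l \<subseteq> K \<union> Ccut \<or> chans ends l \<inter> K = {}"
    and CoK: "Co \<subseteq> K" and CsK: "Cs \<inter> K = {}"
  shows "\<exists>A \<in> exec ends traces chan msg.
           restr chan Co A = restr chan Co (B1, R1) \<and> restr chan Cs A = restr chan Cs (B2, R2)"
proof -
  define Cut where "Cut = {e\<in>B1. chan e \<in> Ccut}"
  define D1 where "D1 = {e\<in>B1. chan e \<in> K \<union> Ccut}"
  define D2 where "D2 = {e\<in>B2. chan e \<notin> K}"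
  define Q1 where "Q1 = R1 \<inter> D1 \<times> D1"
  define Q2 where "Q2 = R2 \<inter> D2 \<times> D2"
  define R where "R = Q1 \<union> Q2 \<union> Q1 O Q2 \<union> Q2 O Q1"
  define B where "B = D1 \<union> D2"
  have soe1: "system_of_events (B1, R1)" and soe2: "system_of_events (B2, R2)"
    using A1 A2 by (auto simp: exec_def)
  have R1B: "R1 \<subseteq> B1 \<times> B1" and refl1: "\<forall>x\<in>B1. (x,x) \<in> R1" and anti1: "antisym R1"
    and tr1: "trans R1" and fin1': "\<forall>e\<in>B1. finite {e'. (e', e) \<in> R1}"
    using soe1 by (auto simp: system_of_events_def refl_on_def)
  have R2B: "R2 \<subseteq> B2 \<times> B2" and refl2: "\<forall>x\<in>B2. (x,x) \<in> R2" and anti2: "antisym R2"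
    and tr2: "trans R2" and fin2': "\<forall>e\<in>B2. finite {e'. (e', e) \<in> R2}"
    using soe2 by (auto simp: system_of_events_def refl_on_def)
  have fin1: "finite {e'. (e', e) \<in> R1}" for e
  proof (cases "e \<in> B1")
    case True then show ?thesis using fin1' by auto
  next
    case False then have "{e'. (e', e) \<in> R1} = {}" using R1B by auto
    then show ?thesis by simp
  qed
  have fin2: "finite {e'. (e', e) \<in> R2}" for e
  proof (cases "e \<in> B2")
    case True then show ?thesis using fin2' by auto
  next
    case False then have "{e'. (e', e) \<in> R2} = {}" using R2B by auto
    then show ?thesis by simp
  qed
  have cutB: "Cut = {e\<in>B2. chan e \<in> Ccut}"
    using cuteq unfolding Cut_def restr_def by (simp add: Let_def)
  have cutR: "R1 \<inter> Cut \<times> Cut = R2 \<inter> Cut \<times> Cut"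
    using cuteq unfolding restr_def by (simp add: Let_def Cut_def[symmetric] cutB[symmetric])
  have D12: "D1 \<inter> D2 = Cut" using KC cutB unfolding D1_def D2_def Cut_def by blast
  have cR: "c \<in> Cut \<Longrightarrow> d \<in> Cut \<Longrightarrow> (c, d) \<in> R1 \<longleftrightarrow> (c, d) \<in> R2" for c d
    using cutR by blast
  have t1: "(x,y) \<in> Q1 \<Longrightarrow> (y,z) \<in> Q1 \<Longrightarrow> (x,z) \<in> Q1" for x y z
    using tr1 unfolding Q1_def trans_def by blast
  have t2: "(x,y) \<in> Q2 \<Longrightarrow> (y,z) \<in> Q2 \<Longrightarrow> (x,z) \<in> Q2" for x y z
    using tr2 unfolding Q2_def trans_def by blast
  have q21: "(x,y) \<in> Q2 \<Longrightarrow> x \<in> D1 \<Longrightarrow> y \<in> D1 \<Longrightarrow> (x,y) \<in> Q1" for x y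
    using cR D12 unfolding Q1_def Q2_def by blast
  have q12: "(x,y) \<in> Q1 \<Longrightarrow> x \<in> D2 \<Longrightarrow> y \<in> D2 \<Longrightarrow> (x,y) \<in> Q2" for x y
    using cR D12 unfolding Q1_def Q2_def by blast
  have Q1D: "(x,y) \<in> Q1 \<Longrightarrow> x \<in> D1 \<and> y \<in> D1" for x y unfolding Q1_def by blast
  have Q2D: "(x,y) \<in> Q2 \<Longrightarrow> x \<in> D2 \<and> y \<in> D2" for x y unfolding Q2_def by blast
  have t121: "(x,y) \<in> Q1 \<Longrightarrow> (y,z) \<in> Q2 \<Longrightarrow> (z,w) \<in> Q1 \<Longrightarrow> (x,w) \<in> Q1" for x y z w
    by (meson Q1D Q2D q21 t1)
  have t212: "(x,y) \<in> Q2 \<Longrightarrow> (y,z) \<in> Q1 \<Longrightarrow> (z,w) \<in> Q2 \<Longrightarrow> (x,w) \<in> Q2" for x y z w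
    by (meson Q1D Q2D q12 t2)
  have key1: "R \<inter> D1 \<times> D1 = Q1"
  proof
    show "R \<inter> D1 \<times> D1 \<subseteq> Q1"
    proof safe
      fix x y assume xy: "(x,y) \<in> R" and x: "x \<in> D1" and y: "y \<in> D1"
      show "(x,y) \<in> Q1" using xy unfolding R_def
      proof (elim UnE relcompE)
        assume "(x,y) \<in> Q2" then show ?thesis using q21 x y by blast
      next
        fix a b c assume "(x,y) = (a,c)" "(a,b) \<in> Q1" "(b,c) \<in> Q2"
        then show ?thesis using q21 Q1D y t1 by blast
      next
        fix a b c assume "(x,y) = (a,c)" "(a,b) \<in> Q2" "(b,c) \<in> Q1"
        then show ?thesis using q21 Q1D x t1 by blast
      qed
    qed
    show "Q1 \<subseteq> R \<inter> D1 \<times> D1" unfolding R_def Q1_def by blast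
  qed
  have key2: "R \<inter> D2 \<times> D2 = Q2"
  proof
    show "R \<inter> D2 \<times> D2 \<subseteq> Q2"
    proof safe
      fix x y assume xy: "(x,y) \<in> R" and x: "x \<in> D2" and y: "y \<in> D2"
      show "(x,y) \<in> Q2" using xy unfolding R_def
      proof (elim UnE relcompE)
        assume "(x,y) \<in> Q1" then show ?thesis using q12 x y by blast
      next
        fix a b c assume "(x,y) = (a,c)" "(a,b) \<in> Q1" "(b,c) \<in> Q2"
        then show ?thesis using q12 Q2D x t2 by blast
      next
        fix a b c assume "(x,y) = (a,c)" "(a,b) \<in> Q2" "(b,c) \<in> Q1"
        then show ?thesis using q12 Q2D y t2 by blast
      qed
    qed
    show "Q2 \<subseteq> R \<inter> D2 \<times> D2" unfolding R_def Q2_def by blast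
  qed
  have sub1: "T \<subseteq> D1 \<Longrightarrow> R \<inter> T \<times> T = R1 \<inter> T \<times> T" for T
    using key1 unfolding Q1_def by blast
  have sub2: "T \<subseteq> D2 \<Longrightarrow> R \<inter> T \<times> T = R2 \<inter> T \<times> T" for T
    using key2 unfolding Q2_def by blast
  have Rm: "(x,z) \<in> R \<longleftrightarrow> (x,z) \<in> Q1 \<or> (x,z) \<in> Q2 \<or> (\<exists>b. (x,b) \<in> Q1 \<and> (b,z) \<in> Q2)
      \<or> (\<exists>b. (x,b) \<in> Q2 \<and> (b,z) \<in> Q1)" for x z
    unfolding R_def by blast
  have trR: "trans R"
  proof (rule transI)
    fix x y z assume a: "(x,y) \<in> R" and b: "(y,z) \<in> R"
    from a b show "(x,z) \<in> R" unfolding Rm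
      by (elim disjE exE conjE) (meson t1 t2 t121 t212)+
  qed
  have antiR: "antisym R"
  proof (rule antisymI)
    fix x y assume xy: "(x,y) \<in> R" and yx: "(y,x) \<in> R"
    have xB: "x \<in> B" and yB: "y \<in> B" using xy unfolding R_def B_def Q1_def Q2_def by blast+
    show "x = y"
    proof (cases "x \<in> D1 \<and> y \<in> D1")
      case True
      then have "(x,y) \<in> Q1" "(y,x) \<in> Q1" using key1 xy yx by blast+
      then show ?thesis using anti1 unfolding Q1_def antisym_def by blast
    next
      case F1: False
      show ?thesis
      proof (cases "x \<in> D2 \<and> y \<in> D2")
        case True
        then have "(x,y) \<in> Q2" "(y,x) \<in> Q2" using key2 xy yx by blast+
        then show ?thesis using anti2 unfolding Q2_def antisym_def by blast
      next
        case F2: False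
        have "(x \<in> D1 \<and> x \<notin> D2 \<and> y \<in> D2 \<and> y \<notin> D1) \<or> (y \<in> D1 \<and> y \<notin> D2 \<and> x \<in> D2 \<and> x \<notin> D1)"
          using F1 F2 xB yB unfolding B_def by blast
        then show ?thesis
        proof
          assume h: "x \<in> D1 \<and> x \<notin> D2 \<and> y \<in> D2 \<and> y \<notin> D1"
          then obtain c where c1: "(x,c) \<in> Q1" and c2: "(c,y) \<in> Q2"
            using xy unfolding R_def using Q1D Q2D by blast
          obtain d where d2: "(y,d) \<in> Q2" and d1: "(d,x) \<in> Q1"
            using yx h unfolding R_def using Q1D Q2D by blast
          have "(c,d) \<in> Q2" using t2 c2 d2 by blast
          then have "(c,d) \<in> Q1" using q21 Q1D c1 d1 by blast
          then have "(d,x) \<in> Q1" "(x,d) \<in> Q1" using d1 c1 t1 by blast+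
          then have "x = d" using anti1 unfolding Q1_def antisym_def by blast
          then show ?thesis using h d1 d2 Q2D by blast
        next
          assume h: "y \<in> D1 \<and> y \<notin> D2 \<and> x \<in> D2 \<and> x \<notin> D1"
          then obtain c where c1: "(y,c) \<in> Q1" and c2: "(c,x) \<in> Q2"
            using yx unfolding R_def using Q1D Q2D by blast
          obtain d where d2: "(x,d) \<in> Q2" and d1: "(d,y) \<in> Q1"
            using xy h unfolding R_def using Q1D Q2D by blast
          have "(c,d) \<in> Q2" using t2 c2 d2 by blast
          then have "(c,d) \<in> Q1" using q21 Q1D c1 d1 by blast
          then have "(d,y) \<in> Q1" "(y,d) \<in> Q1" using d1 c1 t1 by blast+
          then have "y = d" using anti1 unfolding Q1_def antisym_def by blast
          then show ?thesis using h d1 d2 Q2D by blast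
        qed
      qed
    qed
  qed
  have RB: "R \<subseteq> B \<times> B" unfolding R_def B_def Q1_def Q2_def by blast
  have reflR: "refl_on B R" unfolding refl_on_def R_def B_def Q1_def Q2_def D1_def D2_def
    using refl1 refl2 by blast
  have finR: "finite {e'. (e', e) \<in> R}" for e
  proof -
    have "{e'. (e', e) \<in> R} \<subseteq> {e'. (e', e) \<in> R1} \<union> {e'. (e', e) \<in> R2}
      \<union> (\<Union>c\<in>{c. (c,e) \<in> R2}. {e'. (e', c) \<in> R1}) \<union> (\<Union>c\<in>{c. (c,e) \<in> R1}. {e'. (e', c) \<in> R2})"
      unfolding R_def Q1_def Q2_def by blast
    moreover have "finite ({e'. (e', e) \<in> R1} \<union> {e'. (e', e) \<in> R2}
      \<union> (\<Union>c\<in>{c. (c,e) \<in> R2}. {e'. (e', c) \<in> R1}) \<union> (\<Union>c\<in>{c. (c,e) \<in> R1}. {e'. (e', c) \<in> R2}))"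
      using fin1 fin2 by auto
    ultimately show ?thesis using finite_subset by blast
  qed
  have soe: "system_of_events (B, R)"
    unfolding system_of_events_def using RB reflR antiR trR finR by simp
  have locs: "(\<forall>e\<in>S. \<forall>e'\<in>S. (e, e') \<in> R \<or> (e', e) \<in> R) \<and> label_seq chan msg R S \<in> traces l"
    if S: "S = {e\<in>B. chan e \<in> chans ends l}" for l S
  proof (cases "chans ends l \<subseteq> K \<union> Ccut")
    case True
    have SS: "S = {e\<in>B1. chan e \<in> chans ends l}" and SD: "S \<subseteq> D1"
      using True S cutB unfolding B_def D1_def D2_def Cut_def by blast+
    have h1: "(\<forall>e\<in>S. \<forall>e'\<in>S. (e, e') \<in> R1 \<or> (e', e) \<in> R1) \<and> label_seq chan msg R1 S \<in> traces l"
      using A1 unfolding exec_def SS by (simp add: Let_def) blast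
    have E: "R \<inter> S \<times> S = R1 \<inter> S \<times> S" using sub1 SD by blast
    have L: "label_seq chan msg R S = label_seq chan msg R1 S" by (rule label_seq_cong[OF E])
    show ?thesis
    proof (intro conjI)
      show "\<forall>e\<in>S. \<forall>e'\<in>S. (e, e') \<in> R \<or> (e', e) \<in> R" using h1 E by blast
      show "label_seq chan msg R S \<in> traces l" using h1 L by simp
    qed
  next
    case False
    then have F: "chans ends l \<inter> K = {}" using loc by blast
    have SS: "S = {e\<in>B2. chan e \<in> chans ends l}" and SD: "S \<subseteq> D2"
      using F S cutB unfolding B_def D1_def D2_def Cut_def by blast+
    have h1: "(\<forall>e\<in>S. \<forall>e'\<in>S. (e, e') \<in> R2 \<or> (e', e) \<in> R2) \<and> label_seq chan msg R2 S \<in> traces l"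
      using A2 unfolding exec_def SS by (simp add: Let_def) blast
    have E: "R \<inter> S \<times> S = R2 \<inter> S \<times> S" using sub2 SD by blast
    have L: "label_seq chan msg R S = label_seq chan msg R2 S" by (rule label_seq_cong[OF E])
    show ?thesis
    proof (intro conjI)
      show "\<forall>e\<in>S. \<forall>e'\<in>S. (e, e') \<in> R \<or> (e', e) \<in> R" using h1 E by blast
      show "label_seq chan msg R S \<in> traces l" using h1 L by simp
    qed
  qed
  have ex: "(B, R) \<in> exec ends traces chan msg"
    unfolding exec_def using soe locs[OF refl] by (simp add: Let_def) blast
  have r1: "restr chan Co (B, R) = restr chan Co (B1, R1)"
  proof -
    have e: "{e\<in>B. chan e \<in> Co} = {e\<in>B1. chan e \<in> Co}" and s: "{e\<in>B1. chan e \<in> Co} \<subseteq> D1"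
      using CoK unfolding B_def D1_def D2_def by blast+
    show ?thesis unfolding restr_def using e sub1[OF s] by (simp add: Let_def)
  qed
  have r2: "restr chan Cs (B, R) = restr chan Cs (B2, R2)"
  proof -
    have e: "{e\<in>B. chan e \<in> Cs} = {e\<in>B2. chan e \<in> Cs}" and s: "{e\<in>B2. chan e \<in> Cs} \<subseteq> D2"
      using CsK KC cutB unfolding B_def D1_def D2_def Cut_def by blast+
    show ?thesis unfolding restr_def using e sub2[OF s] by (simp add: Let_def)
  qed
  show ?thesis using ex r1 r2 by blast
qed


theorem lemma5:
  fixes ends :: "'c \<Rightarrow> ('l \<times> 'l) option"
    and traces :: "'l \<Rightarrow> ('c \<times> 'd) fiseq set"
    and chan :: "'e \<Rightarrow> 'c" and msg :: "'e \<Rightarrow> 'd"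
    and Cs Ccut Co :: "'c set" and Bo :: "'e soe"
  assumes "frame ends traces"
    and "undirected_cut ends Ccut Cs Co"
    and "Bo \<in> lruns ends traces chan msg Co"
  shows "J ends traces chan msg Co Cs Bo =
         (\<Union>Bc \<in> J ends traces chan msg Co Ccut Bo. J ends traces chan msg Ccut Cs Bc)"
proof -
  have d1: "Cs \<inter> Ccut = {}" and d2: "Cs \<inter> Co = {}" and d3: "Ccut \<inter> Co = {}"
    and cutp: "\<And>ls cs. upath ends ls cs \<Longrightarrow> hd ls \<in> endpoint_locs ends Co \<Longrightarrow>
                 last ls \<in> endpoint_locs ends Cs \<Longrightarrow> \<exists>c\<in>set cs. c \<in> Ccut"
    using assms(2) unfolding undirected_cut_def by blast+
  define X where "X = {l. \<exists>ls cs. upath ends ls cs \<and> hd ls \<in> endpoint_locs ends Co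
                        \<and> last ls = l \<and> (\<forall>c\<in>set cs. c \<notin> Ccut)}"
  define K where "K = Co \<union> {c. c \<notin> Ccut \<and> (\<exists>s r. ends c = Some (s, r) \<and> s \<in> X)}"
  have Xext: "r \<in> X" if l: "l \<in> X" and e: "ends c = Some (l, r) \<or> ends c = Some (r, l)"
    and c: "c \<notin> Ccut" for l r c
  proof -
    obtain ls cs where p: "upath ends ls cs" and h: "hd ls \<in> endpoint_locs ends Co"
      and la: "last ls = l" and nc: "\<forall>c\<in>set cs. c \<notin> Ccut"
      using l unfolding X_def by blast
    have ne: "ls \<noteq> []" using p by (auto simp: upath_def)
    have "upath ends (ls @ [r]) (cs @ [c])" using upath_snoc[OF p] e la by blast
    moreover have "hd (ls @ [r]) \<in> endpoint_locs ends Co" using h ne by simp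
    moreover have "last (ls @ [r]) = r" by simp
    moreover have "\<forall>c'\<in>set (cs @ [c]). c' \<notin> Ccut" using nc c by simp
    ultimately show ?thesis unfolding X_def by blast
  qed
  have Xco: "l \<in> X" if "l \<in> endpoint_locs ends Co" for l
    using that upath_single[of ends l] unfolding X_def by fastforce
  have KC: "K \<inter> Ccut = {}" using d3 unfolding K_def by blast
  have CoK: "Co \<subseteq> K" unfolding K_def by blast
  have CsK: "Cs \<inter> K = {}"
  proof (rule ccontr)
    assume "Cs \<inter> K \<noteq> {}"
    then obtain c where cs: "c \<in> Cs" and cK: "c \<in> K" by blast
    have "c \<notin> Co" using cs d2 by blast
    then obtain s r where cc: "c \<notin> Ccut" and e: "ends c = Some (s, r)" and sX: "s \<in> X"
      using cK unfolding K_def by blast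
    obtain ls cs' where p: "upath ends ls cs'" and h: "hd ls \<in> endpoint_locs ends Co"
      and la: "last ls = s" and nc: "\<forall>c\<in>set cs'. c \<notin> Ccut"
      using sX unfolding X_def by blast
    have "last ls \<in> endpoint_locs ends Cs" using la e cs unfolding endpoint_locs_def by blast
    then show False using cutp[OF p h] nc by blast
  qed
  have loc: "chans ends l \<subseteq> K \<union> Ccut \<or> chans ends l \<inter> K = {}" for l
  proof (cases "l \<in> X")
    case True
    have "chans ends l \<subseteq> K \<union> Ccut"
    proof
      fix c assume "c \<in> chans ends l"
      then obtain s r where e: "ends c = Some (s, r)" and sr: "s = l \<or> r = l"
        unfolding chans_def by blast
      show "c \<in> K \<union> Ccut"
      proof (cases "c \<in> Ccut")
        case False
        have "s \<in> X" using sr True Xext[of l c s] e False by blast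
        then show ?thesis using e False unfolding K_def by blast
      qed simp
    qed
    then show ?thesis by blast
  next
    case False
    have "chans ends l \<inter> K = {}"
    proof (rule ccontr)
      assume "chans ends l \<inter> K \<noteq> {}"
      then obtain c where cl: "c \<in> chans ends l" and cK: "c \<in> K" by blast
      then obtain s r where e: "ends c = Some (s, r)" and sr: "s = l \<or> r = l"
        unfolding chans_def by blast
      show False
      proof (cases "c \<in> Co")
        case True
        then have "l \<in> endpoint_locs ends Co" using e sr unfolding endpoint_locs_def by blast
        then show False using Xco False by blast
      next
        case nco: False
        then obtain s' r' where cc: "c \<notin> Ccut" and e': "ends c = Some (s', r')" and sX: "s' \<in> X"
          using cK unfolding K_def by blast
        have "s' = s" "r' = r" using e e' by auto
        then have "s \<in> X" "r \<in> X" using sX Xext[of s c r] e cc by auto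
        then show False using sr False by blast
      qed
    qed
    then show ?thesis by blast
  qed
  show ?thesis
  proof (rule set_eqI, rule iffI)
    fix x assume "x \<in> J ends traces chan msg Co Cs Bo"
    then obtain A where A: "A \<in> exec ends traces chan msg" "restr chan Co A = Bo" "x = restr chan Cs A"
      unfolding J_def by blast
    have "restr chan Ccut A \<in> J ends traces chan msg Co Ccut Bo" using A unfolding J_def by blast
    moreover have "x \<in> J ends traces chan msg Ccut Cs (restr chan Ccut A)" using A unfolding J_def by blast
    ultimately show "x \<in> (\<Union>Bc \<in> J ends traces chan msg Co Ccut Bo. J ends traces chan msg Ccut Cs Bc)"
      by blast
  next
    fix x assume "x \<in> (\<Union>Bc \<in> J ends traces chan msg Co Ccut Bo. J ends traces chan msg Ccut Cs Bc)"
    then obtain Bc where Bc: "Bc \<in> J ends traces chan msg Co Ccut Bo"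
      and x: "x \<in> J ends traces chan msg Ccut Cs Bc" by blast
    obtain A1 where A1: "A1 \<in> exec ends traces chan msg" "restr chan Co A1 = Bo" "Bc = restr chan Ccut A1"
      using Bc unfolding J_def by blast
    obtain A2 where A2: "A2 \<in> exec ends traces chan msg" "restr chan Ccut A2 = Bc" "x = restr chan Cs A2"
      using x unfolding J_def by blast
    obtain B1 R1 where p1: "A1 = (B1, R1)" by (cases A1)
    obtain B2 R2 where p2: "A2 = (B2, R2)" by (cases A2)
    obtain A where A: "A \<in> exec ends traces chan msg" "restr chan Co A = restr chan Co (B1, R1)"
       "restr chan Cs A = restr chan Cs (B2, R2)"
      using glue[of B1 R1 ends traces chan msg B2 R2 K Ccut Co Cs] A1 A2 p1 p2 KC loc CoK CsK
      by auto
    show "x \<in> J ends traces chan msg Co Cs Bo"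
    proof -
      have "x = restr chan Cs A" using A(3) A2(3) p2 by simp
      moreover have "restr chan Co A = Bo" using A(2) A1(2) p1 by simp
      ultimately show ?thesis unfolding J_def using A(1) by blast
    qed
  qed
qed

end
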